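(* For every $n\ge0$ and every $t\in\mathbb{R}$, $Q_n(1-t)=(-1)^n\sigma_n(t)$.
   Context: For positive integers $j$: $\sigma_0(j)=1$, $\sigma_i(j)=\sum_{1\le n_1<\cdots<n_i\le j-1}n_1\cdots n_i$ for $1\le i\le j-1$, $\sigma_i(j)=0$ for $i\ge j$; $Q_0(j)=1$ and $Q_k(j)=-\sum_{i=1}^k\sigma_i(j)Q_{k-i}(j)$ for $k\ge1$. For each fixed $n$, $\sigma_n(j)$ and $Q_n(j)$ agree on all positive integers $j$ with polynomials in $j$; $\sigma_n(t)$ and $Q_n(t)$ for real $t$ denote these polynomials evaluated at $t$. *)

theory Defs
  imports "HOL-Computational_Algebra.Polynomial"
begin

definition sigma_int :: "nat \<Rightarrow> nat \<Rightarrow> real" where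
  "sigma_int i j =
     (if i = 0 then 1
      else if i \<le> j - 1 then
        (\<Sum>S \<in> {S. S \<subseteq> {1..j-1} \<and> card S = i}. real (\<Prod>S))
      else 0)"

function Q_int :: "nat \<Rightarrow> nat \<Rightarrow> real" where
  "Q_int 0 j = 1"
| "Q_int (Suc k) j = - (\<Sum>i\<in>{1..Suc k}. sigma_int i j * Q_int (Suc k - i) j)"
  by pat_completeness auto
termination
  by (relation "measure fst") auto

definition sigma_poly :: "nat \<Rightarrow> real poly" where
  "sigma_poly n = (THE p. \<forall>j::nat. j \<ge> 1 \<longrightarrow> poly p (real j) = sigma_int n j)"

definition Q_poly :: "nat \<Rightarrow> real poly" where
  "Q_poly n = (THE p. \<forall>j::nat. j \<ge> 1 \<longrightarrow> poly p (real j) = Q_int n j)"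

end

theory Submission
  imports Defs "HOL-Computational_Algebra.Formal_Power_Series"
begin

definition ispoly :: "(real \<Rightarrow> real) \<Rightarrow> bool" where
  "ispoly f = (\<exists>p. \<forall>x. f x = poly p x)"

lemma ispoly_const: "ispoly (\<lambda>x. c)"
  unfolding ispoly_def by (rule exI[of _ "[:c:]"]) simp

lemma ispoly_id: "ispoly (\<lambda>x. x)"
  unfolding ispoly_def by (rule exI[of _ "[:0,1:]"]) simp

lemma ispoly_add: "ispoly f \<Longrightarrow> ispoly g \<Longrightarrow> ispoly (\<lambda>x. f x + g x)"
  unfolding ispoly_def by (metis poly_add)

lemma ispoly_mult: "ispoly f \<Longrightarrow> ispoly g \<Longrightarrow> ispoly (\<lambda>x. f x * g x)"
  unfolding ispoly_def by (metis poly_mult)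

lemma ispoly_diff: "ispoly f \<Longrightarrow> ispoly g \<Longrightarrow> ispoly (\<lambda>x. f x - g x)"
  unfolding ispoly_def by (metis poly_diff)

lemma ispoly_scale: "ispoly f \<Longrightarrow> ispoly (\<lambda>x. c * f x)"
  using ispoly_mult[OF ispoly_const] by blast

lemma ispoly_pow: "ispoly (\<lambda>x. x ^ k)"
  by (induction k) (auto intro: ispoly_const ispoly_mult[OF ispoly_id])

lemma ispoly_sum: "finite A \<Longrightarrow> (\<And>i. i \<in> A \<Longrightarrow> ispoly (f i)) \<Longrightarrow> ispoly (\<lambda>x. \<Sum>i\<in>A. f i x)"
  by (induction A rule: finite_induct) (auto intro: ispoly_const ispoly_add)

lemma antidiff_pow: "\<exists>g. ispoly g \<and> (\<forall>x. g (x+1) - g x = x ^ k)"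
proof (induction k rule: less_induct)
  case (less k)
  then have "\<forall>i. \<exists>g. i < k \<longrightarrow> ispoly g \<and> (\<forall>x. g (x+1) - g x = x ^ i)" by blast
  then obtain G where G: "\<And>i. i < k \<Longrightarrow> ispoly (G i) \<and> (\<forall>x. G i (x+1) - G i x = x ^ i)"
    by metis
  define g where "g = (\<lambda>x. (x ^ Suc k - (\<Sum>i<k. real (Suc k choose i) * G i x)) / real (Suc k))"
  have "ispoly g"
  proof -
    have "ispoly (\<lambda>x. \<Sum>i<k. real (Suc k choose i) * G i x)"
      by (rule ispoly_sum) (use G in \<open>auto intro: ispoly_scale\<close>)
    then have "ispoly (\<lambda>x. inverse (real (Suc k)) * (x ^ Suc k - (\<Sum>i<k. real (Suc k choose i) * G i x)))"
      by (intro ispoly_scale ispoly_diff ispoly_pow)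
    then show ?thesis unfolding g_def by (simp add: divide_inverse mult.commute)
  qed
  moreover have "g (x+1) - g x = x ^ k" for x
  proof -
    have bin: "(x+1) ^ Suc k = (\<Sum>i\<le>Suc k. real (Suc k choose i) * x ^ i)"
      by (subst binomial_ring) simp
    have "(\<Sum>i\<le>Suc k. real (Suc k choose i) * x ^ i)
        = (\<Sum>i<k. real (Suc k choose i) * x ^ i) + real (Suc k) * x ^ k + x ^ Suc k"
      by (simp add: lessThan_Suc_atMost[symmetric])
    moreover have "(\<Sum>i<k. real (Suc k choose i) * G i (x+1)) - (\<Sum>i<k. real (Suc k choose i) * G i x)
        = (\<Sum>i<k. real (Suc k choose i) * x ^ i)"
      unfolding sum_subtractf[symmetric]
      by (rule sum.cong) (use G in \<open>auto simp: right_diff_distrib[symmetric]\<close>)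
    ultimately have "(x+1) ^ Suc k - (\<Sum>i<k. real (Suc k choose i) * G i (x+1))
       - (x ^ Suc k - (\<Sum>i<k. real (Suc k choose i) * G i x)) = real (Suc k) * x ^ k"
      using bin by (simp add: algebra_simps)
    then show ?thesis unfolding g_def
      by (simp add: diff_divide_distrib[symmetric] del: of_nat_Suc)
  qed
  ultimately show ?case by blast
qed

lemma antidiff: "ispoly f \<Longrightarrow> \<exists>g. ispoly g \<and> (\<forall>x. g (x+1) - g x = f x)"
proof -
  assume "ispoly f"
  then obtain p where p: "\<And>x. f x = poly p x" unfolding ispoly_def by blast
  from antidiff_pow obtain G where G: "\<And>i. ispoly (G i) \<and> (\<forall>x. G i (x+1) - G i x = x ^ i)"
    by metis
  define g where "g = (\<lambda>x. \<Sum>i\<le>degree p. coeff p i * G i x)"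
  have "ispoly g" unfolding g_def
    by (rule ispoly_sum) (use G in \<open>auto intro: ispoly_scale\<close>)
  moreover have "g (x+1) - g x = f x" for x
    unfolding g_def p poly_altdef sum_subtractf[symmetric]
    by (rule sum.cong) (use G in \<open>auto simp: right_diff_distrib[symmetric]\<close>)
  ultimately show ?thesis by blast
qed

lemma poly_uniq:
  fixes p q :: "real poly"
  assumes "\<And>j. j \<ge> 1 \<Longrightarrow> poly p (real j) = poly q (real j)"
  shows "p = q"
proof (rule ccontr)
  assume "p \<noteq> q"
  then have "finite {x. poly (p - q) x = 0}" by (intro poly_roots_finite) simp
  moreover have "real ` {1..} \<subseteq> {x. poly (p - q) x = 0}" using assms by auto
  ultimately have "finite (real ` {(1::nat)..})" by (rule finite_subset[rotated])
  then have "finite {(1::nat)..}" by (rule finite_imageD) (simp add: inj_on_def)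
  then show False using infinite_Ici[of "1::nat"] by simp
qed

definition esym :: "nat \<Rightarrow> nat set \<Rightarrow> real" where
  "esym i A = (\<Sum>S \<in> {S. S \<subseteq> A \<and> card S = i}. real (\<Prod>S))"

lemma sigma_esym: "sigma_int i j = esym i {1..j-1}"
proof (cases "i = 0")
  case True
  have "{S. S \<subseteq> {1..j-1} \<and> card S = 0} = {{}}"
    by (auto dest: finite_subset)
  then show ?thesis using True by (simp add: sigma_int_def esym_def)
next
  case False
  show ?thesis
  proof (cases "i \<le> j - 1")
    case True then show ?thesis using False by (simp add: sigma_int_def esym_def)
  next
    case F: False
    have c: "card S \<le> j - 1" if "S \<subseteq> {1..j-1}" for S
      using card_mono[OF _ that] by simp
    have "{S. S \<subseteq> {1..j-1} \<and> card S = i} = {}"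
      using F c by fastforce
    then have "esym i {1..j-1} = 0" unfolding esym_def by (simp only: sum.empty)
    then show ?thesis using False F by (simp add: sigma_int_def)
  qed
qed

lemma esym_insert:
  assumes fin: "finite A" and a: "a \<notin> A"
  shows "esym (Suc i) (insert a A) = esym (Suc i) A + real a * esym i A"
proof -
  let ?X = "{S. S \<subseteq> A \<and> card S = Suc i}"
  let ?Y = "{S. S \<subseteq> A \<and> card S = i}"
  have eq: "{S. S \<subseteq> insert a A \<and> card S = Suc i} = ?X \<union> insert a ` ?Y"
  proof (rule set_eqI, rule iffI)
    fix S assume S: "S \<in> {S. S \<subseteq> insert a A \<and> card S = Suc i}"
    show "S \<in> ?X \<union> insert a ` ?Y"
    proof (cases "a \<in> S")
      case True
      have fS: "finite S" using S fin by (auto dest: finite_subset)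
      have "S = insert a (S - {a})" using True by auto
      moreover have "S - {a} \<in> ?Y" using S True fS by auto
      ultimately show ?thesis by blast
    next
      case False then show ?thesis using S by auto
    qed
  next
    fix S assume "S \<in> ?X \<union> insert a ` ?Y"
    then show "S \<in> {S. S \<subseteq> insert a A \<and> card S = Suc i}"
    proof
      assume "S \<in> ?X" then show ?thesis by auto
    next
      assume "S \<in> insert a ` ?Y"
      then obtain T where T: "T \<subseteq> A" "card T = i" "S = insert a T" by auto
      have "finite T" using T fin by (auto dest: finite_subset)
      then show ?thesis using T a by (auto simp: card_insert_if)
    qed
  qed
  have finX: "finite ?X" using fin by (auto intro: finite_subset[of _ "Pow A"])
  have finY: "finite ?Y" using fin by (auto intro: finite_subset[of _ "Pow A"])
  have disj: "?X \<inter> insert a ` ?Y = {}" using a by auto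
  have inj: "inj_on (insert a) ?Y" unfolding inj_on_def using a by (auto simp: insert_ident)
  have "esym (Suc i) (insert a A) = (\<Sum>S\<in>?X. real (\<Prod>S)) + (\<Sum>S\<in>insert a ` ?Y. real (\<Prod>S))"
    unfolding esym_def eq using finX finY disj by (simp add: sum.union_disjoint)
  also have "(\<Sum>S\<in>insert a ` ?Y. real (\<Prod>S)) = (\<Sum>T\<in>?Y. real (\<Prod>(insert a T)))"
    using inj by (simp add: sum.reindex)
  also have "\<dots> = (\<Sum>T\<in>?Y. real a * real (\<Prod>T))"
  proof (rule sum.cong)
    fix T assume "T \<in> ?Y"
    then have "finite T" "a \<notin> T" using fin a by (auto dest: finite_subset)
    then show "real (\<Prod>(insert a T)) = real a * real (\<Prod>T)" by simp
  qed simp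
  finally show ?thesis unfolding esym_def by (simp add: sum_distrib_left)
qed

lemma sigma_rec:
  assumes "j \<ge> 1"
  shows "sigma_int (Suc i) (Suc j) = sigma_int (Suc i) j + real j * sigma_int i j"
proof -
  have "{1..Suc j - 1} = insert j {1..j-1}" using assms by auto
  moreover have "esym (Suc i) (insert j {1..j-1}) = esym (Suc i) {1..j-1} + real j * esym i {1..j-1}"
    by (rule esym_insert) auto
  ultimately show ?thesis unfolding sigma_esym by simp
qed

lemma sigma_zero [simp]: "sigma_int 0 j = 1"
  by (simp add: sigma_int_def)

lemma sigma_Suc_1 [simp]: "sigma_int (Suc i) 1 = 0" "sigma_int (Suc i) (Suc 0) = 0"
  by (simp_all add: sigma_int_def)

lemma sigma_exists: "\<exists>p. \<forall>j\<ge>1. poly p (real j) = sigma_int n j"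
proof (induction n)
  case 0
  show ?case by (rule exI[of _ "[:1:]"]) simp
next
  case (Suc n)
  then obtain p where p: "\<And>j. j \<ge> 1 \<Longrightarrow> poly p (real j) = sigma_int n j" by blast
  have "ispoly (\<lambda>x. x * poly p x)"
    by (rule ispoly_mult[OF ispoly_id]) (auto simp: ispoly_def)
  then obtain g where g: "ispoly g" "\<And>x. g (x+1) - g x = x * poly p x"
    using antidiff by blast
  then obtain q where q: "\<And>x. g x = poly q x" unfolding ispoly_def by blast
  define r where "r = q - [:poly q 1:]"
  have r: "poly r (x+1) = poly r x + x * poly p x" for x
    using g(2)[of x] unfolding q r_def by simp
  have "poly r (real j) = sigma_int (Suc n) j" if "j \<ge> 1" for j
    using that
  proof (induction j rule: dec_induct)
    case base
    then show ?case by (simp add: r_def sigma_Suc_1)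
  next
    case (step j)
    have "poly r (real (Suc j)) = poly r (real j) + real j * poly p (real j)"
      using r[of "real j"] by (simp add: add.commute)
    then show ?case using step p sigma_rec by simp
  qed
  then show ?case by blast
qed

lemma sigma_poly_spec: "j \<ge> 1 \<Longrightarrow> poly (sigma_poly n) (real j) = sigma_int n j"
proof -
  obtain p where p: "\<forall>j\<ge>1. poly p (real j) = sigma_int n j" using sigma_exists by blast
  have "sigma_poly n = p" unfolding sigma_poly_def
    by (rule the_equality) (use p in \<open>auto intro: poly_uniq\<close>)
  then show "j \<ge> 1 \<Longrightarrow> poly (sigma_poly n) (real j) = sigma_int n j" using p by simp
qed

lemma sigma_poly_rec: "poly (sigma_poly (Suc n)) (x+1) = poly (sigma_poly (Suc n)) x + x * poly (sigma_poly n) x"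
proof -
  let ?P = "sigma_poly (Suc n)"
  have "pcompose ?P [:1,1:] = ?P + [:0,1:] * sigma_poly n"
  proof (rule poly_uniq)
    fix j :: nat assume j: "j \<ge> 1"
    have "poly (pcompose ?P [:1,1:]) (real j) = poly ?P (real (Suc j))"
      by (simp add: poly_pcompose add.commute)
    also have "\<dots> = sigma_int (Suc n) (Suc j)"
      by (rule sigma_poly_spec) simp
    also have "\<dots> = sigma_int (Suc n) j + real j * sigma_int n j"
      using j by (rule sigma_rec)
    finally show "poly (pcompose ?P [:1,1:]) (real j) = poly (?P + [:0,1:] * sigma_poly n) (real j)"
      using j by (simp add: sigma_poly_spec)
  qed
  then have "poly (pcompose ?P [:1,1:]) x = poly (?P + [:0,1:] * sigma_poly n) x" by simp
  then show ?thesis by (simp add: poly_pcompose add.commute)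
qed

definition FF :: "nat \<Rightarrow> real fps" where "FF j = Abs_fps (\<lambda>i. sigma_int i j)"
definition GG :: "nat \<Rightarrow> real fps" where "GG j = Abs_fps (\<lambda>k. Q_int k j)"

lemma FG: "FF j * GG j = 1"
proof (rule fps_ext)
  fix n
  show "fps_nth (FF j * GG j) n = fps_nth 1 n"
  proof (cases n)
    case 0 then show ?thesis by (simp add: fps_mult_nth FF_def GG_def)
  next
    case (Suc k)
    have "fps_nth (FF j * GG j) n = (\<Sum>i=0..Suc k. sigma_int i j * Q_int (Suc k - i) j)"
      by (simp add: fps_mult_nth FF_def GG_def Suc)
    also have "\<dots> = Q_int (Suc k) j + (\<Sum>i=1..Suc k. sigma_int i j * Q_int (Suc k - i) j)"
      by (subst sum.atLeast_Suc_atMost) simp_all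
    also have "\<dots> = 0" by simp
    finally show ?thesis using Suc by simp
  qed
qed

lemma F_Suc: "j \<ge> 1 \<Longrightarrow> FF (Suc j) = FF j * (1 + fps_const (real j) * fps_X)"
proof (rule fps_ext)
  fix n assume j: "j \<ge> 1"
  have e: "FF j * (1 + fps_const (real j) * fps_X) = FF j + fps_const (real j) * (fps_X * FF j)"
    by (simp add: algebra_simps)
  show "fps_nth (FF (Suc j)) n = fps_nth (FF j * (1 + fps_const (real j) * fps_X)) n"
    unfolding e by (cases n) (simp_all add: FF_def sigma_rec[OF j])
qed

lemma Q_rec:
  assumes "j \<ge> 1"
  shows "Q_int (Suc n) j = Q_int (Suc n) (Suc j) + real j * Q_int n (Suc j)"
proof -
  let ?H = "(1 + fps_const (real j) * fps_X) * GG (Suc j)"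
  have "FF j * ?H = 1" using FG[of "Suc j"] F_Suc[OF assms] by (simp add: mult.assoc)
  then have "GG j * (FF j * ?H) = GG j" by simp
  then have HG: "?H = GG j" using FG[of j] by (simp add: mult.assoc[symmetric] mult.commute)
  have e: "?H = GG (Suc j) + fps_const (real j) * (fps_X * GG (Suc j))"
    by (simp add: algebra_simps)
  have "fps_nth (GG j) (Suc n) = fps_nth ?H (Suc n)" using HG by simp
  then show ?thesis unfolding e by (simp add: GG_def)
qed

lemma Q_Suc_1: "Q_int (Suc n) 1 = 0" "Q_int (Suc n) (Suc 0) = 0"
proof -
  have "(\<Sum>i\<in>{1..Suc n}. sigma_int i 1 * Q_int (Suc n - i) 1) = 0"
    by (intro sum.neutral) (auto simp: sigma_int_def)
  then show "Q_int (Suc n) 1 = 0" "Q_int (Suc n) (Suc 0) = 0"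
    by (simp_all only: Q_int.simps One_nat_def)
qed

lemma sigma_poly_0: "poly (sigma_poly (Suc n)) 0 = 0"
  using sigma_poly_rec[of n 0] sigma_poly_spec[of 1 "Suc n"] by (simp add: sigma_Suc_1)

definition RR :: "nat \<Rightarrow> real poly" where
  "RR n = smult ((-1) ^ n) (pcompose (sigma_poly n) [:1,-1:])"

lemma RR_poly: "poly (RR n) x = (-1) ^ n * poly (sigma_poly n) (1 - x)"
  by (simp add: RR_def poly_pcompose)

lemma RR_Q: "j \<ge> 1 \<Longrightarrow> poly (RR n) (real j) = Q_int n j"
proof (induction n arbitrary: j)
  case 0
  have "sigma_poly 0 = [:1:]"
    by (rule poly_uniq) (simp add: sigma_poly_spec)
  then show ?case by (simp add: RR_poly)
next
  case (Suc n)
  from Suc.prems show ?case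
  proof (induction j rule: dec_induct)
    case base
    then show ?case by (simp add: RR_poly sigma_poly_0 Q_Suc_1 del: Q_int.simps)
  next
    case (step j)
    have rec: "poly (sigma_poly (Suc n)) (1 - real j) =
        poly (sigma_poly (Suc n)) (- real j) + (- real j) * poly (sigma_poly n) (- real j)"
      using sigma_poly_rec[of n "- real j"] by simp
    have "poly (RR (Suc n)) (real (Suc j)) = poly (RR (Suc n)) (real j) - real j * poly (RR n) (real (Suc j))"
    proof -
      have rec2: "poly (sigma_poly (Suc n)) (- real j) = poly (sigma_poly (Suc n)) (1 - real j) + real j * poly (sigma_poly n) (- real j)"
        using rec by simp
      show ?thesis unfolding RR_poly by (simp add: rec2 algebra_simps)
    qed
    also have "\<dots> = Q_int (Suc n) j - real j * Q_int n (Suc j)"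
      using step Suc.IH[of "Suc j"] by simp
    also have "\<dots> = Q_int (Suc n) (Suc j)" using Q_rec[OF step(1)] by simp
    finally show ?case .
  qed
qed

theorem lemma2p4:
  fixes n :: nat and t :: real
  shows "poly (Q_poly n) (1 - t) = (-1) ^ n * poly (sigma_poly n) t"
proof -
  have "Q_poly n = RR n" unfolding Q_poly_def
    by (rule the_equality) (auto simp: RR_Q intro: poly_uniq)
  then show ?thesis by (simp add: RR_poly)
qed

end
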